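(* Let $k\ge 0$ and $s,g_1,b_2>0$ be integers with $k\le g_1\le b_2$. Then $$t^kA_s=\lambda_1t^kA_{z_1}+\lambda_2t^{g_1}A_{z_2}+t^{b_2}A_{z_3},$$ a partition into summands with pairwise disjoint sets of monomials, where $A_{z_i}\in\mathbb{Z}[t]$ and: $z_1=g_1-k$, $\lambda_1=\epsilon_{g_1+k+s}$ when $g_1\le k+s$; $z_1=s$, $\lambda_1=1$ when $k+s\le g_1$; $z_2=b_2-g_1$, $\lambda_2=\epsilon_{b_2+k+s}$ when $b_2\le k+s$; $z_2=k+s-g_1$, $\lambda_2=1$ when $g_1\le k+s\le b_2$; $z_2=0$, $\lambda_2=1$ when $k+s\le g_1$; $z_3=k+s-b_2$ when $k+s\ge b_2$; $z_3=0$ when $k+s\le b_2$.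
   Context: $\epsilon_x=(-1)^x$. For an integer $w$, $A_w=(t^w+\epsilon_{w-1})/(t+1)$; for $w>0$, $A_w=\sum_{j=0}^{w-1}\epsilon_jt^{w-1-j}$, and $A_0=0$. *)

theory Defs
  imports "HOL-Computational_Algebra.Polynomial"
begin

definition eps :: "nat \<Rightarrow> int" where
  "eps x = (-1) ^ x"

definition A :: "nat \<Rightarrow> int poly" where
  "A w = (\<Sum>j<w. monom (eps j) (w - 1 - j))"

definition mono_set :: "int poly \<Rightarrow> nat set" where
  "mono_set p = {i. coeff p i \<noteq> 0}"

end

theory Submission
  imports Defs
begin

lemma coeff_A: "coeff (A w) d = (if d < w then eps (w - 1 - d) else 0)"
proof -
  have "coeff (A w) d = (\<Sum>j<w. if j = w - 1 - d \<and> d < w then eps j else 0)"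
    unfolding A_def coeff_sum coeff_monom
    by (rule sum.cong) auto
  also have "\<dots> = (if d < w then eps (w - 1 - d) else 0)"
    by (cases "d < w") (auto simp: sum.delta)
  finally show ?thesis .
qed

lemma coeff_tA: "coeff (monom 1 k * A w) e = (if k \<le> e \<and> e < k + w then eps (k + w - 1 - e) else 0)"
  by (auto simp: coeff_monom_mult coeff_A add.commute)

lemma tA_in: "k \<le> e \<Longrightarrow> e < k + w \<Longrightarrow> coeff (monom 1 k * A w) e = eps (k + w - 1 - e)"
  by (simp add: coeff_tA)

lemma tA_out: "\<not> (k \<le> e \<and> e < k + w) \<Longrightarrow> coeff (monom 1 k * A w) e = 0"
  by (auto simp: coeff_tA)

lemma eps_nz: "eps n \<noteq> 0" by (simp add: eps_def)

lemma eps_add: "eps (a + b) = eps a * eps b" by (simp add: eps_def power_add)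

lemma eps_if: "eps n = (if even n then 1 else -1)" by (simp add: eps_def)

lemma eps_mul: "even (a + b + c) \<Longrightarrow> eps a * eps b = eps c"
  by (cases "even a"; cases "even b"; cases "even c") (auto simp: eps_def)

lemma ms_sub: "mono_set (smult l (monom 1 k * A w)) \<subseteq> {k..<k+w}"
  by (auto simp: mono_set_def coeff_tA split: if_splits)

lemma ms_sub': "mono_set (monom 1 k * A w) \<subseteq> {k..<k+w}"
  by (auto simp: mono_set_def coeff_tA split: if_splits)

lemma disj: "(X::nat set) \<subseteq> {a..<b} \<Longrightarrow> Y \<subseteq> {c..<d} \<Longrightarrow> b \<le> c \<Longrightarrow> X \<inter> Y = {}"
proof (rule ccontr)
  assume "X \<subseteq> {a..<b}" "Y \<subseteq> {c..<d}" "b \<le> c" "X \<inter> Y \<noteq> {}"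
  then obtain x where "x \<in> X" "x \<in> Y" by blast
  then have "x < b" "c \<le> x" using \<open>X \<subseteq> {a..<b}\<close> \<open>Y \<subseteq> {c..<d}\<close> by auto
  then show False using \<open>b \<le> c\<close> by simp
qed

theorem proposition2p12:
  fixes k s g1 b2 z1 z2 z3 :: nat and l1 l2 :: int
  assumes "s > 0" "g1 > 0" "b2 > 0" "k \<le> g1" "g1 \<le> b2"
    and "g1 \<le> k + s \<Longrightarrow> z1 = g1 - k \<and> l1 = eps (g1 + k + s)"
    and "k + s \<le> g1 \<Longrightarrow> z1 = s \<and> l1 = 1"
    and "b2 \<le> k + s \<Longrightarrow> z2 = b2 - g1 \<and> l2 = eps (b2 + k + s)"
    and "g1 \<le> k + s \<Longrightarrow> k + s \<le> b2 \<Longrightarrow> z2 = k + s - g1 \<and> l2 = 1"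
    and "k + s \<le> g1 \<Longrightarrow> z2 = 0 \<and> l2 = 1"
    and "b2 \<le> k + s \<Longrightarrow> z3 = k + s - b2"
    and "k + s \<le> b2 \<Longrightarrow> z3 = 0"
  shows "monom 1 k * A s
           = smult l1 (monom 1 k * A z1) + smult l2 (monom 1 g1 * A z2) + monom 1 b2 * A z3
       \<and> mono_set (smult l1 (monom 1 k * A z1)) \<inter> mono_set (smult l2 (monom 1 g1 * A z2)) = {}
       \<and> mono_set (smult l1 (monom 1 k * A z1)) \<inter> mono_set (monom 1 b2 * A z3) = {}
       \<and> mono_set (smult l2 (monom 1 g1 * A z2)) \<inter> mono_set (monom 1 b2 * A z3) = {}"
proof -
  have b1: "k + z1 \<le> g1" and b2': "g1 + z2 \<le> b2"
    using assms(4-10) by (cases "k + s \<le> g1"; cases "b2 \<le> k + s"; force)+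
  have eq: "monom 1 k * A s
           = smult l1 (monom 1 k * A z1) + smult l2 (monom 1 g1 * A z2) + monom 1 b2 * A z3"
  proof (rule poly_eqI)
    fix e
    define L where "L = coeff (monom 1 k * A s) e"
    define T1 where "T1 = coeff (monom 1 k * A z1) e"
    define T2 where "T2 = coeff (monom 1 g1 * A z2) e"
    define T3 where "T3 = coeff (monom 1 b2 * A z3) e"
    have main: "L = l1 * T1 + l2 * T2 + T3"
    proof (cases "k + s \<le> g1")
      case True
      then have h: "z1 = s" "l1 = 1" "z2 = 0" "l2 = 1" "z3 = 0" using assms by auto
      show ?thesis unfolding L_def T1_def T2_def T3_def h by (simp add: A_def)
    next
      case F1: False
      show ?thesis
      proof (cases "e < k \<or> k + s \<le> e")
        case True
        have c: "k + z1 \<le> k + s" "z2 = 0 \<or> g1 + z2 \<le> k + s" "z3 = 0 \<or> b2 + z3 \<le> k + s"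
          using assms F1 by (cases "b2 \<le> k + s"; force)+
        have "L = 0" unfolding L_def by (rule tA_out) (use True in linarith)
        moreover have "T1 = 0" unfolding T1_def by (rule tA_out) (use True c(1) in linarith)
        moreover have "T2 = 0" unfolding T2_def by (rule tA_out) (use True c(2) assms(4) in linarith)
        moreover have "T3 = 0" unfolding T3_def by (rule tA_out) (use True c(3) assms(4,5) in linarith)
        ultimately show ?thesis by simp
      next
        case ek: False
        then have L: "L = eps (k + s - 1 - e)" unfolding L_def by (intro tA_in) auto
        show ?thesis
        proof (cases "e < g1")
          case True
          have "z1 = g1 - k" "l1 = eps (g1 + k + s)" using assms F1 by auto
          then have "l1 * T1 = eps (g1 + k + s) * eps (g1 - 1 - e)"
            unfolding T1_def using True ek assms(4) by (subst tA_in) auto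
          also have "\<dots> = eps (k + s - 1 - e)"
          proof (rule eps_mul)
            have "g1 + k + s + (g1 - 1 - e) + (k + s - 1 - e) = 2 * (g1 + k + s - 1 - e)"
              using True ek by linarith
            then show "even (g1 + k + s + (g1 - 1 - e) + (k + s - 1 - e))" by simp
          qed
          finally have 1: "l1 * T1 = L" using L by simp
          have "T2 = 0" "T3 = 0" unfolding T2_def T3_def using True assms(5)
            by (auto intro!: tA_out)
          then show ?thesis using 1 by simp
        next
          case g: False
          have "T1 = 0" unfolding T1_def using g b1 by (auto intro!: tA_out)
          show ?thesis
          proof (cases "b2 \<le> k + s")
            case True
            then have h: "z2 = b2 - g1" "l2 = eps (b2 + k + s)" "z3 = k + s - b2"
              using assms by auto
            show ?thesis
            proof (cases "e < b2")
              case True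
              have "l2 * T2 = eps (b2 + k + s) * eps (b2 - 1 - e)"
                unfolding T2_def h using True g assms(5) by (subst tA_in) auto
              also have "\<dots> = eps (k + s - 1 - e)"
              proof (rule eps_mul)
                have "b2 + k + s + (b2 - 1 - e) + (k + s - 1 - e) = 2 * (b2 + k + s - 1 - e)"
                  using True ek g by linarith
                then show "even (b2 + k + s + (b2 - 1 - e) + (k + s - 1 - e))" by simp
              qed
              finally have 1: "l2 * T2 = L" using L by simp
              have "T3 = 0" unfolding T3_def using True by (auto intro!: tA_out)
              then show ?thesis using 1 \<open>T1 = 0\<close> by simp
            next
              case False
              have "T2 = 0" unfolding T2_def h using False by (auto intro!: tA_out)
              moreover have "T3 = L" unfolding T3_def h L using False ek \<open>b2 \<le> k + s\<close>
                by (subst tA_in) auto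
              ultimately show ?thesis using \<open>T1 = 0\<close> by simp
            qed
          next
            case False
            then have h: "z2 = k + s - g1" "l2 = 1" "z3 = 0" using assms F1 by auto
            have "T2 = L" unfolding T2_def h L using g ek F1 by (subst tA_in) auto
            moreover have "T3 = 0" unfolding T3_def h by (auto intro!: tA_out)
            ultimately show ?thesis using \<open>T1 = 0\<close> h by simp
          qed
        qed
      qed
    qed
    then show "coeff (monom 1 k * A s) e = coeff (smult l1 (monom 1 k * A z1) + smult l2 (monom 1 g1 * A z2) + monom 1 b2 * A z3) e"
      unfolding L_def T1_def T2_def T3_def by simp
  qed
  show ?thesis
    using eq disj[OF ms_sub ms_sub b1] disj[OF ms_sub ms_sub' order.trans[OF b1 order.trans[OF le_add1 b2']]]
      disj[OF ms_sub ms_sub' b2'] by blast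
qed

end
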